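(* Let $C,A_1,\dots,A_m\in\mathbb{S}^n$, $b\in\mathbb{R}^m$, and write $\mathcal{L}(y)=C-\sum_{i=1}^my_iA_i$. Let $(U,V)\in\mathbb{R}^{n\times n}$ be invertible with $U\in\mathbb{R}^{n\times d}$, $V\in\mathbb{R}^{n\times(n-d)}$, $U^TV=0$. Consider the problem (R/D-SDP): minimize $C\cdot X$ subject to $A_i\cdot X=b_i$ ($i=1,\dots,m$) and $X=(U,V)\begin{pmatrix}W&Z\\Z^T&R\end{pmatrix}(U,V)^T$ with $W\in\mathbb{S}^d_+$, $R\in\mathbb{S}^{n-d}$, $Z\in\mathbb{R}^{d\times(n-d)}$. Assume (R/D-SDP) has an optimal solution and that $$\{y\in\mathbb{R}^m: V^T\mathcal{L}(y)V=0\}=\{y\in\mathbb{R}^m: V^T\mathcal{L}(y)V=0,\ V^T\mathcal{L}(y)U=0\}.$$ Then (R/D-SDP) has an optimal solution with $Z=0$.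
   Context: $\mathbb{S}^n$ is the space of real symmetric $n\times n$ matrices with trace inner product $A\cdot B=\operatorname{trace}(AB)$; $\mathbb{S}^d_+$ is the positive semidefinite cone. *)

theory Defs
  imports "Jordan_Normal_Form.Matrix"
begin

definition mtrace :: "real mat \<Rightarrow> real" where
  "mtrace M = (\<Sum>i<dim_row M. M $$ (i, i))"

definition tinner :: "real mat \<Rightarrow> real mat \<Rightarrow> real" where
  "tinner A B = mtrace (A * B)"

definition symmetric_mat :: "nat \<Rightarrow> real mat \<Rightarrow> bool" where
  "symmetric_mat k M \<longleftrightarrow> M \<in> carrier_mat k k \<and> transpose_mat M = M"

definition psd_mat :: "nat \<Rightarrow> real mat \<Rightarrow> bool" where
  "psd_mat k M \<longleftrightarrow> symmetric_mat k M \<and> (\<forall>v \<in> carrier_vec k. v \<bullet> (M *\<^sub>v v) \<ge> 0)"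

definition Lmap :: "nat \<Rightarrow> nat \<Rightarrow> real mat \<Rightarrow> (nat \<Rightarrow> real mat) \<Rightarrow> real vec \<Rightarrow> real mat" where
  "Lmap n m C A y = mat n n (\<lambda>(i, j). C $$ (i, j) - (\<Sum>k<m. y $ k * A k $$ (i, j)))"

definition concat_cols :: "nat \<Rightarrow> nat \<Rightarrow> real mat \<Rightarrow> real mat \<Rightarrow> real mat" where
  "concat_cols n d U V = mat n n (\<lambda>(i, j). if j < d then U $$ (i, j) else V $$ (i, j - d))"

definition Xof :: "nat \<Rightarrow> nat \<Rightarrow> real mat \<Rightarrow> real mat \<Rightarrow> real mat \<Rightarrow> real mat \<Rightarrow> real mat \<Rightarrow> real mat" where
  "Xof n d U V W Z R =
     concat_cols n d U V * four_block_mat W Z (transpose_mat Z) R * transpose_mat (concat_cols n d U V)"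

definition RD_feasible ::
  "nat \<Rightarrow> nat \<Rightarrow> nat \<Rightarrow> (nat \<Rightarrow> real mat) \<Rightarrow> real vec \<Rightarrow> real mat \<Rightarrow> real mat
   \<Rightarrow> real mat \<Rightarrow> real mat \<Rightarrow> real mat \<Rightarrow> bool" where
  "RD_feasible n d m A b U V W Z R \<longleftrightarrow>
     psd_mat d W \<and> symmetric_mat (n - d) R \<and> Z \<in> carrier_mat d (n - d) \<and>
     (\<forall>i<m. tinner (A i) (Xof n d U V W Z R) = b $ i)"

definition RD_optimal ::
  "nat \<Rightarrow> nat \<Rightarrow> nat \<Rightarrow> real mat \<Rightarrow> (nat \<Rightarrow> real mat) \<Rightarrow> real vec \<Rightarrow> real mat \<Rightarrow> real mat
   \<Rightarrow> real mat \<Rightarrow> real mat \<Rightarrow> real mat \<Rightarrow> bool" where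
  "RD_optimal n d m C A b U V W Z R \<longleftrightarrow>
     RD_feasible n d m A b U V W Z R \<and>
     (\<forall>W' Z' R'. RD_feasible n d m A b U V W' Z' R' \<longrightarrow>
        tinner C (Xof n d U V W Z R) \<le> tinner C (Xof n d U V W' Z' R'))"

end

theory Submission
  imports Defs
begin



lemma KL:
  fixes f :: "'j \<Rightarrow> ('a \<Rightarrow> real) \<Rightarrow> real" and g :: "('a \<Rightarrow> real) \<Rightarrow> real"
  assumes "finite J"
    and "\<forall>j\<in>J. \<forall>x e t. f j (\<lambda>k. x k - t * e k) = f j x - t * f j e"
    and "\<forall>x e t. g (\<lambda>k. x k - t * e k) = g x - t * g e"
    and "\<forall>x. (\<forall>j\<in>J. f j x = 0) \<longrightarrow> g x = 0"
  shows "\<exists>y. \<forall>x. g x = (\<Sum>j\<in>J. y j * f j x)"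
  using assms
proof (induction J arbitrary: f g rule: finite_induct)
  case empty
  then show ?case by auto
next
  case (insert j J)
  show ?case
  proof (cases "\<forall>e. f j e = 0")
    case True
    have "\<exists>y. \<forall>x. g x = (\<Sum>j\<in>J. y j * f j x)"
      apply (rule insert.IH)
      using insert.prems True by auto
    then obtain y where y: "\<forall>x. g x = (\<Sum>j\<in>J. y j * f j x)" by blast
    show ?thesis
      by (rule exI[of _ y], use y True insert.hyps in simp)
  next
    case False
    then obtain e where e: "f j e \<noteq> 0" by blast
    define f' where "f' i x = f i x - f i e / f j e * f j x" for i x
    define g' where "g' x = g x - g e / f j e * f j x" for x
    have linj: "\<And>x e t. f j (\<lambda>k. x k - t * e k) = f j x - t * f j e"
      using insert.prems(1) by auto
    have "\<exists>y. \<forall>x. g' x = (\<Sum>i\<in>J. y i * f' i x)"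
    proof (rule insert.IH)
      show "\<forall>i\<in>J. \<forall>x e' t. f' i (\<lambda>k. x k - t * e' k) = f' i x - t * f' i e'"
      proof (intro ballI allI)
        fix i x e' t assume i: "i \<in> J"
        have fi: "f i (\<lambda>k. x k - t * e' k) = f i x - t * f i e'" using insert.prems(1) i by auto
        show "f' i (\<lambda>k. x k - t * e' k) = f' i x - t * f' i e'"
          unfolding f'_def fi linj by (simp add: algebra_simps)
      qed
      show "\<forall>x e' t. g' (\<lambda>k. x k - t * e' k) = g' x - t * g' e'"
      proof (intro allI)
        fix x e' t
        have gi: "g (\<lambda>k. x k - t * e' k) = g x - t * g e'" using insert.prems(2) by auto
        show "g' (\<lambda>k. x k - t * e' k) = g' x - t * g' e'"
          unfolding g'_def gi linj by (simp add: algebra_simps)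
      qed
      show "\<forall>x. (\<forall>i\<in>J. f' i x = 0) \<longrightarrow> g' x = 0"
      proof (intro allI impI)
        fix x assume h: "\<forall>i\<in>J. f' i x = 0"
        define x' where "x' = (\<lambda>k. x k - (f j x / f j e) * e k)"
        have "f j x' = 0" unfolding x'_def linj using e by simp
        moreover have "\<forall>i\<in>J. f i x' = 0"
        proof
          fix i assume i: "i \<in> J"
          have fi: "f i x' = f i x - (f j x / f j e) * f i e" using insert.prems(1) i unfolding x'_def by blast
          show "f i x' = 0" unfolding fi using h i unfolding f'_def by (simp add: algebra_simps)
        qed
        ultimately have "g x' = 0" using insert.prems(3) by auto
        moreover have "g x' = g x - (f j x / f j e) * g e" using insert.prems(2) unfolding x'_def by blast
        ultimately show "g' x = 0" unfolding g'_def by (simp add: algebra_simps)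
      qed
    qed
    then obtain y where y: "\<forall>x. g' x = (\<Sum>i\<in>J. y i * f' i x)" by blast
    define y' where "y' = y(j := g e / f j e - (\<Sum>i\<in>J. y i * f i e) / f j e)"
    show ?thesis
    proof (rule exI[of _ y'], intro allI)
      fix x
      have s: "(\<Sum>i\<in>J. y' i * f i x) = (\<Sum>i\<in>J. y i * f i x)"
        using insert.hyps unfolding y'_def by (intro sum.cong) auto
      have "g x = g' x + g e / f j e * f j x" unfolding g'_def by simp
      also have "\<dots> = (\<Sum>i\<in>J. y i * f i x) - (\<Sum>i\<in>J. y i * f i e) / f j e * f j x + g e / f j e * f j x"
        using y unfolding f'_def
        by (simp add: right_diff_distrib sum_subtractf sum_distrib_right sum_divide_distrib mult.assoc)
      also have "\<dots> = (\<Sum>i\<in>insert j J. y' i * f i x)"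
        using insert.hyps s unfolding y'_def by (simp add: algebra_simps diff_divide_distrib)
      finally show "g x = (\<Sum>i\<in>insert j J. y' i * f i x)" .
    qed
  qed
qed




lemma mtrace_mult:
  assumes "M \<in> carrier_mat a b" "N \<in> carrier_mat b a"
  shows "mtrace (M * N) = (\<Sum>i<a. \<Sum>k<b. M $$ (i,k) * N $$ (k,i))"
  using assms unfolding mtrace_def
  by (auto simp: scalar_prod_def atLeast0LessThan intro!: sum.cong)

lemma mtrace_comm:
  assumes "M \<in> carrier_mat a b" "N \<in> carrier_mat b a"
  shows "mtrace (M * N) = mtrace (N * M)"
  unfolding mtrace_mult[OF assms] mtrace_mult[OF assms(2,1)]
  by (subst sum.swap) (simp add: mult.commute)

lemma entry_XMY:
  assumes "X \<in> carrier_mat n a" "Y \<in> carrier_mat n b" "M \<in> carrier_mat n n" "i < a" "j < b"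
  shows "(transpose_mat X * M * Y) $$ (i,j) = col X i \<bullet> (M *\<^sub>v col Y j)"
proof -
  have "transpose_mat X * M * Y = transpose_mat X * (M * Y)"
    using assms by (intro assoc_mult_mat) auto
  then show ?thesis using assms by (simp add: mult_mat_vec_def)
qed

lemma quad:
  assumes "M \<in> carrier_mat n n" "u \<in> carrier_vec n" "w \<in> carrier_vec n"
  shows "u \<bullet> (M *\<^sub>v w) = (\<Sum>l<n. \<Sum>j<n. u $ l * M $$ (l,j) * w $ j)"
  using assms by (auto simp: scalar_prod_def atLeast0LessThan sum_distrib_left mult.assoc intro!: sum.cong)

lemma Lmap_quad:
  assumes "\<forall>k<m. A k \<in> carrier_mat n n" "C \<in> carrier_mat n n" "u \<in> carrier_vec n" "w \<in> carrier_vec n"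
  shows "u \<bullet> (Lmap n m C A y *\<^sub>v w) = u \<bullet> (C *\<^sub>v w) - (\<Sum>k<m. y $ k * (u \<bullet> (A k *\<^sub>v w)))"
proof -
  have L: "Lmap n m C A y \<in> carrier_mat n n" unfolding Lmap_def by simp
  have "u \<bullet> (Lmap n m C A y *\<^sub>v w) = (\<Sum>l<n. \<Sum>j<n. u $ l * (C $$ (l,j) - (\<Sum>k<m. y $ k * A k $$ (l, j))) * w $ j)"
    unfolding quad[OF L assms(3,4)] unfolding Lmap_def by (intro sum.cong refl) simp
  also have "\<dots> = (\<Sum>l<n. \<Sum>j<n. u $ l * C $$ (l,j) * w $ j) - (\<Sum>l<n. \<Sum>j<n. \<Sum>k<m. y $ k * (u $ l * A k $$ (l, j) * w $ j))"
    by (simp add: right_diff_distrib left_diff_distrib sum_subtractf sum_distrib_left sum_distrib_right mult.assoc mult.left_commute)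
  also have "(\<Sum>l<n. \<Sum>j<n. \<Sum>k<m. y $ k * (u $ l * A k $$ (l, j) * w $ j)) = (\<Sum>k<m. y $ k * (\<Sum>l<n. \<Sum>j<n. u $ l * A k $$ (l, j) * w $ j))"
    by (simp add: sum_distrib_left sum.swap[of _ "{..<m}"])
  also have "(\<Sum>k<m. y $ k * (\<Sum>l<n. \<Sum>j<n. u $ l * A k $$ (l, j) * w $ j)) = (\<Sum>k<m. y $ k * (u \<bullet> (A k *\<^sub>v w)))"
    using assms by (intro sum.cong refl) (simp add: quad[of "A _" n u w])
  finally show ?thesis using assms by (simp add: quad)
qed




lemma col_P1:
  assumes "U \<in> carrier_mat n d" "d \<le> n" "a < d"
  shows "col (concat_cols n d U V) a = col U a"
  using assms by (intro eq_vecI) (auto simp: concat_cols_def)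

lemma col_P2:
  assumes "V \<in> carrier_mat n (n - d)" "d \<le> a" "a < n"
  shows "col (concat_cols n d U V) a = col V (a - d)"
  using assms by (intro eq_vecI) (auto simp: concat_cols_def)

definition symm :: "nat \<Rightarrow> real mat \<Rightarrow> bool" where
  "symm n B \<longleftrightarrow> B \<in> carrier_mat n n \<and> (\<forall>i<n. \<forall>j<n. B $$ (i,j) = B $$ (j,i))"

definition fr :: "nat \<Rightarrow> real mat \<Rightarrow> real mat \<Rightarrow> real" where
  "fr n G B = (\<Sum>a<n. \<Sum>c<n. G $$ (a,c) * B $$ (a,c))"

lemma tinner_X:
  assumes "A \<in> carrier_mat n n" "P \<in> carrier_mat n n" "symm n B"
  shows "tinner A (P * B * transpose_mat P) = fr n (transpose_mat P * A * P) B"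
proof -
  have B: "B \<in> carrier_mat n n" using assms(3) unfolding symm_def by auto
  have PT: "transpose_mat P \<in> carrier_mat n n" using assms by auto
  have e1: "A * (P * B * transpose_mat P) = (A * P * B) * transpose_mat P"
    using assms(1,2) B PT by (simp add: assoc_mult_mat[of _ n n _ n _ n])
  have e2: "transpose_mat P * (A * P * B) = (transpose_mat P * A * P) * B"
    using assms(1,2) B PT by (simp add: assoc_mult_mat[of _ n n _ n _ n])
  have "tinner A (P * B * transpose_mat P) = mtrace ((A * P * B) * transpose_mat P)"
    unfolding tinner_def e1 ..
  also have "\<dots> = mtrace (transpose_mat P * (A * P * B))"
    by (rule mtrace_comm[of _ n n]) (use assms B in auto)
  also have "\<dots> = mtrace ((transpose_mat P * A * P) * B)" unfolding e2 ..
  also have "\<dots> = (\<Sum>a<n. \<Sum>c<n. (transpose_mat P * A * P) $$ (a,c) * B $$ (c,a))"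
    by (rule mtrace_mult) (use assms B in auto)
  also have "\<dots> = fr n (transpose_mat P * A * P) B"
    unfolding fr_def using assms(3) unfolding symm_def by (auto intro!: sum.cong)
  finally show ?thesis .
qed

lemma G_sym:
  assumes "symmetric_mat n A" "P \<in> carrier_mat n n" "a < n" "c < n"
  shows "(transpose_mat P * A * P) $$ (a,c) = (transpose_mat P * A * P) $$ (c,a)"
proof -
  have A: "A \<in> carrier_mat n n" and At: "transpose_mat A = A" using assms(1) unfolding symmetric_mat_def by auto
  have "(transpose_mat P * A * P) $$ (a,c) = col P a \<bullet> (A *\<^sub>v col P c)"
    by (rule entry_XMY[of P n n P n A]) (use assms A in auto)
  also have "\<dots> = (\<Sum>l<n. \<Sum>j<n. col P a $ l * A $$ (l,j) * col P c $ j)"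
    by (rule quad) (use assms A in auto)
  also have "\<dots> = (\<Sum>j<n. \<Sum>l<n. col P c $ j * A $$ (j,l) * col P a $ l)"
    apply (subst sum.swap)
    apply (intro sum.cong refl)
    using At A by (metis (no_types, lifting) carrier_matD index_transpose_mat(1) lessThan_iff mult.commute mult.left_commute)
  also have "\<dots> = col P c \<bullet> (A *\<^sub>v col P a)"
    by (rule quad[symmetric]) (use assms A in auto)
  also have "\<dots> = (transpose_mat P * A * P) $$ (c,a)"
    by (rule entry_XMY[of P n n P n A, symmetric]) (use assms A in auto)
  finally show ?thesis .
qed

definition blkW :: "nat \<Rightarrow> real mat \<Rightarrow> real mat" where
  "blkW d B = mat d d (\<lambda>(i,j). B $$ (i,j))"
definition blkZ :: "nat \<Rightarrow> nat \<Rightarrow> real mat \<Rightarrow> real mat" where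
  "blkZ n d B = mat d (n - d) (\<lambda>(i,j). B $$ (i,j + d))"
definition blkR :: "nat \<Rightarrow> nat \<Rightarrow> real mat \<Rightarrow> real mat" where
  "blkR n d B = mat (n - d) (n - d) (\<lambda>(i,j). B $$ (i + d,j + d))"

lemma recon:
  assumes "symm n B" "d \<le> n"
  shows "four_block_mat (blkW d B) (blkZ n d B) (transpose_mat (blkZ n d B)) (blkR n d B) = B"
  using assms unfolding symm_def blkW_def blkZ_def blkR_def
  by (intro eq_matI) auto

lemma symm_four:
  assumes "symmetric_mat d W" "symmetric_mat (n - d) R" "Z \<in> carrier_mat d (n - d)" "d \<le> n"
  shows "symm n (four_block_mat W Z (transpose_mat Z) R)"
proof -
  have W: "W \<in> carrier_mat d d" "transpose_mat W = W" and R: "R \<in> carrier_mat (n-d) (n-d)" "transpose_mat R = R"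
    using assms unfolding symmetric_mat_def by auto
  have Wij: "W $$ (i,j) = W $$ (j,i)" if "i < d" "j < d" for i j
    using W that by (metis carrier_matD index_transpose_mat(1))
  have Rij: "R $$ (i,j) = R $$ (j,i)" if "i < n-d" "j < n-d" for i j
    using R that by (metis carrier_matD index_transpose_mat(1))
  show ?thesis unfolding symm_def
    using W R assms(3,4) Wij Rij by (auto)
qed




definition Q :: "nat \<Rightarrow> real mat \<Rightarrow> (nat \<Rightarrow> nat \<Rightarrow> real) \<Rightarrow> real" where
  "Q n G D = (\<Sum>a<n. \<Sum>c<n. G $$ (a,c) * D a c)"

lemma fr_add:
  assumes "B \<in> carrier_mat n n"
  shows "fr n G (mat n n (\<lambda>(a,c). B $$ (a,c) + D a c)) = fr n G B + Q n G D"
  unfolding fr_def Q_def by (simp add: sum.distrib[symmetric] distrib_left)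

lemma Q_comb:
  assumes "\<forall>a<n. \<forall>c<n. D a c \<noteq> 0 \<longrightarrow> G0 $$ (a,c) = (\<Sum>i<m. y i * Gs i $$ (a,c))"
  shows "Q n G0 D = (\<Sum>i<m. y i * Q n (Gs i) D)"
proof -
  have "Q n G0 D = (\<Sum>a<n. \<Sum>c<n. (\<Sum>i<m. y i * Gs i $$ (a,c)) * D a c)"
    unfolding Q_def using assms by (intro sum.cong refl) (metis lessThan_iff mult_zero_right)
  also have "\<dots> = (\<Sum>i<m. y i * Q n (Gs i) D)"
    unfolding Q_def
    by (simp add: sum_distrib_left sum_distrib_right mult.assoc sum.swap[of _ "{..<m}"])
  finally show ?thesis .
qed

lemma Q_lin:
  "Q n G (\<lambda>a c. D1 a c - t * D2 a c) = Q n G D1 - t * Q n G D2"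
  unfolding Q_def by (simp add: right_diff_distrib sum_subtractf sum_distrib_left mult.left_commute)

definition Dx :: "nat \<Rightarrow> (nat \<times> nat \<Rightarrow> real) \<Rightarrow> nat \<Rightarrow> nat \<Rightarrow> real" where
  "Dx d x a c = (if a < d \<and> c < d then 0 else x (a,c) + x (c,a))"

lemma Dx_lin: "Dx d (\<lambda>k. x k - t * e k) = (\<lambda>a c. Dx d x a c - t * Dx d e a c)"
  unfolding Dx_def by (auto simp: algebra_simps fun_eq_iff)

lemma Q_delta:
  assumes "\<forall>a<n. \<forall>c<n. G $$ (a,c) = G $$ (c,a)" "d \<le> p" "p < n" "q < n"
  shows "Q n G (Dx d (\<lambda>k. if k = (p,q) then 1 else 0)) = 2 * G $$ (p,q)"
proof -
  have "Q n G (Dx d (\<lambda>k. if k = (p,q) then 1 else 0)) =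
     (\<Sum>a<n. \<Sum>c<n. (if c = q then (if a = p then G $$ (p,q) else 0) else 0) + (if c = p then (if a = q then G $$ (q,p) else 0) else 0))"
    unfolding Q_def Dx_def using assms(2) by (intro sum.cong refl) auto
  also have "\<dots> = G $$ (p,q) + G $$ (q,p)"
    using assms by (simp add: sum.distrib sum.delta)
  finally show ?thesis using assms by simp
qed




theorem mainTheorem12:
  fixes n d m :: nat and C :: "real mat" and A :: "nat \<Rightarrow> real mat" and b :: "real vec"
    and U V :: "real mat"
  assumes "d \<le> n"
    and "symmetric_mat n C"
    and "\<forall>i<m. symmetric_mat n (A i)"
    and "b \<in> carrier_vec m"
    and "U \<in> carrier_mat n d" and "V \<in> carrier_mat n (n - d)"
    and "invertible_mat (concat_cols n d U V)"
    and "transpose_mat U * V = 0\<^sub>m d (n - d)"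
    and "\<exists>W Z R. RD_optimal n d m C A b U V W Z R"
    and "{y \<in> carrier_vec m. transpose_mat V * Lmap n m C A y * V = 0\<^sub>m (n - d) (n - d)} =
         {y \<in> carrier_vec m. transpose_mat V * Lmap n m C A y * V = 0\<^sub>m (n - d) (n - d) \<and>
                              transpose_mat V * Lmap n m C A y * U = 0\<^sub>m (n - d) d}"
  shows "\<exists>W R. RD_optimal n d m C A b U V W (0\<^sub>m d (n - d)) R"
proof -
  note dn = assms(1)
  define P where "P = concat_cols n d U V"
  have P: "P \<in> carrier_mat n n" unfolding P_def concat_cols_def by simp
  have Cc: "C \<in> carrier_mat n n" using assms(2) unfolding symmetric_mat_def by auto
  have Ac: "\<forall>k<m. A k \<in> carrier_mat n n" using assms(3) unfolding symmetric_mat_def by auto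
  define GC where "GC = transpose_mat P * C * P"
  define Gs where "Gs i = transpose_mat P * A i * P" for i
  have GCsym: "\<forall>a<n. \<forall>c<n. GC $$ (a,c) = GC $$ (c,a)"
    unfolding GC_def using G_sym[OF assms(2) P] by blast
  have Gsym: "\<forall>a<n. \<forall>c<n. Gs i $$ (a,c) = Gs i $$ (c,a)" if "i < m" for i
    unfolding Gs_def using G_sym[OF _ P] assms(3) that by blast
  have GL: "col P a \<bullet> (Lmap n m C A yv *\<^sub>v col P c) = GC $$ (a,c) - (\<Sum>k<m. yv $ k * Gs k $$ (a,c))"
    if "a < n" "c < n" for a c yv
  proof -
    have "col P a \<bullet> (Lmap n m C A yv *\<^sub>v col P c) = col P a \<bullet> (C *\<^sub>v col P c) - (\<Sum>k<m. yv $ k * (col P a \<bullet> (A k *\<^sub>v col P c)))"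
      by (rule Lmap_quad) (use Ac Cc P that in auto)
    also have "col P a \<bullet> (C *\<^sub>v col P c) = GC $$ (a,c)"
      unfolding GC_def by (rule entry_XMY[symmetric]) (use Cc P that in auto)
    also have "(\<Sum>k<m. yv $ k * (col P a \<bullet> (A k *\<^sub>v col P c))) = (\<Sum>k<m. yv $ k * Gs k $$ (a,c))"
      unfolding Gs_def by (intro sum.cong refl, subst entry_XMY) (use Ac P that in auto)
    finally show ?thesis .
  qed
  have VLV: "(transpose_mat V * Lmap n m C A yv * V) $$ (p,q) = GC $$ (p+d,q+d) - (\<Sum>k<m. yv $ k * Gs k $$ (p+d,q+d))"
    if "p < n - d" "q < n - d" for p q yv
  proof -
    have "(transpose_mat V * Lmap n m C A yv * V) $$ (p,q) = col V p \<bullet> (Lmap n m C A yv *\<^sub>v col V q)"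
      by (rule entry_XMY) (use assms(6) that in \<open>auto simp: Lmap_def\<close>)
    also have "\<dots> = col P (p+d) \<bullet> (Lmap n m C A yv *\<^sub>v col P (q+d))"
      unfolding P_def using col_P2[OF assms(6), of "p+d"] col_P2[OF assms(6), of "q+d"] that by auto
    finally show ?thesis using GL that by auto
  qed
  have VLU: "(transpose_mat V * Lmap n m C A yv * U) $$ (p,q) = GC $$ (p+d,q) - (\<Sum>k<m. yv $ k * Gs k $$ (p+d,q))"
    if "p < n - d" "q < d" for p q yv
  proof -
    have "(transpose_mat V * Lmap n m C A yv * U) $$ (p,q) = col V p \<bullet> (Lmap n m C A yv *\<^sub>v col U q)"
      by (rule entry_XMY) (use assms(5,6) that in \<open>auto simp: Lmap_def\<close>)
    also have "\<dots> = col P (p+d) \<bullet> (Lmap n m C A yv *\<^sub>v col P q)"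
      unfolding P_def using col_P2[OF assms(6), of "p+d"] col_P1[OF assms(5) dn, of q] that by auto
    finally show ?thesis using GL that by auto
  qed
  have Xof_eq: "Xof n d U V W Z R = P * four_block_mat W Z (transpose_mat Z) R * transpose_mat P" for W Z R
    unfolding Xof_def P_def ..
  have val_B: "tinner M (Xof n d U V (blkW d B) (blkZ n d B) (blkR n d B)) = fr n (transpose_mat P * M * P) B"
    if "symm n B" "M \<in> carrier_mat n n" for B M
    unfolding Xof_eq recon[OF that(1) dn] by (rule tinner_X[OF that(2) P that(1)])
  have val_gen: "tinner C (Xof n d U V W Z R) = fr n GC (four_block_mat W Z (transpose_mat Z) R)"
     "symm n (four_block_mat W Z (transpose_mat Z) R)"
    if "RD_feasible n d m A b U V W Z R" for W Z R
  proof -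
    show s: "symm n (four_block_mat W Z (transpose_mat Z) R)"
      using that symm_four[OF _ _ _ dn] unfolding RD_feasible_def psd_mat_def by blast
    show "tinner C (Xof n d U V W Z R) = fr n GC (four_block_mat W Z (transpose_mat Z) R)"
      unfolding Xof_eq GC_def by (rule tinner_X[OF Cc P s])
  qed
  have feas_B: "RD_feasible n d m A b U V (blkW d B) (blkZ n d B) (blkR n d B)"
    if "symm n B" "psd_mat d (blkW d B)" "\<forall>i<m. fr n (Gs i) B = b $ i" for B
  proof -
    have "symmetric_mat (n - d) (blkR n d B)"
      using that(1) unfolding symmetric_mat_def symm_def blkR_def by (auto intro!: eq_matI)
    moreover have "blkZ n d B \<in> carrier_mat d (n - d)" unfolding blkZ_def by simp
    moreover have "\<forall>i<m. tinner (A i) (Xof n d U V (blkW d B) (blkZ n d B) (blkR n d B)) = b $ i"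
      using val_B[OF that(1)] Ac that(3) unfolding Gs_def by auto
    ultimately show ?thesis using that(2) unfolding RD_feasible_def by auto
  qed
  obtain W0 Z0 R0 where opt: "RD_optimal n d m C A b U V W0 Z0 R0" using assms(9) by blast
  have feas0: "RD_feasible n d m A b U V W0 Z0 R0" using opt unfolding RD_optimal_def by auto
  define B0 where "B0 = four_block_mat W0 Z0 (transpose_mat Z0) R0"
  have B0s: "symm n B0" unfolding B0_def by (rule val_gen(2)[OF feas0])
  have B0c: "B0 \<in> carrier_mat n n" using B0s unfolding symm_def by auto
  have W0c: "W0 \<in> carrier_mat d d" using feas0 unfolding RD_feasible_def psd_mat_def symmetric_mat_def by auto
  have psd0: "psd_mat d W0" using feas0 unfolding RD_feasible_def by auto
  have blkW0: "blkW d B0 = W0" unfolding B0_def blkW_def using W0c by (intro eq_matI) auto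
  have val0: "tinner C (Xof n d U V W0 Z0 R0) = fr n GC B0" unfolding B0_def by (rule val_gen(1)[OF feas0])
  have cons0: "\<forall>i<m. fr n (Gs i) B0 = b $ i"
  proof (intro allI impI)
    fix i assume i: "i < m"
    have "tinner (A i) (Xof n d U V W0 Z0 R0) = b $ i" using feas0 i unfolding RD_feasible_def by auto
    moreover have "tinner (A i) (Xof n d U V W0 Z0 R0) = fr n (Gs i) B0"
      unfolding Xof_eq Gs_def B0_def[symmetric] by (rule tinner_X[OF _ P B0s]) (use Ac i in auto)
    ultimately show "fr n (Gs i) B0 = b $ i" by simp
  qed
  have opt0: "fr n GC B0 \<le> fr n GC B"
    if "symm n B" "blkW d B = W0" "\<forall>i<m. fr n (Gs i) B = b $ i" for B
  proof -
    have f: "RD_feasible n d m A b U V (blkW d B) (blkZ n d B) (blkR n d B)"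
      using feas_B[OF that(1) _ that(3)] that(2) psd0 by auto
    have "tinner C (Xof n d U V W0 Z0 R0) \<le> tinner C (Xof n d U V (blkW d B) (blkZ n d B) (blkR n d B))"
      using opt f unfolding RD_optimal_def by blast
    then show ?thesis using val0 val_B[OF that(1) Cc] unfolding GC_def by simp
  qed
  define Bp where "Bp s x = mat n n (\<lambda>(a,c). B0 $$ (a,c) + s * Dx d x a c)" for s x
  have Dx_sym: "Dx d x a c = Dx d x c a" for x a c unfolding Dx_def by auto
  have B0sym: "\<forall>a<n. \<forall>c<n. B0 $$ (a,c) = B0 $$ (c,a)" using B0s unfolding symm_def by auto
  have Bp_s: "symm n (Bp s x)" for s x
    unfolding symm_def Bp_def using B0sym Dx_sym by auto
  have Bp_W: "blkW d (Bp s x) = W0" for s x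
  proof -
    have "blkW d (Bp s x) = blkW d B0"
      unfolding blkW_def Bp_def Dx_def using dn by (intro eq_matI) auto
    then show ?thesis using blkW0 by simp
  qed
  have Bp_fr: "fr n G (Bp s x) = fr n G B0 + s * Q n G (Dx d x)" for G s x
  proof -
    have "fr n G (Bp s x) = fr n G B0 + Q n G (\<lambda>a c. s * Dx d x a c)"
      unfolding Bp_def by (rule fr_add[OF B0c])
    moreover have "Q n G (\<lambda>a c. s * Dx d x a c) = s * Q n G (Dx d x)"
      unfolding Q_def by (simp add: sum_distrib_left mult.left_commute)
    ultimately show ?thesis by simp
  qed
  have "\<exists>y. \<forall>x. Q n GC (Dx d x) = (\<Sum>i\<in>{..<m}. y i * Q n (Gs i) (Dx d x))"
  proof (rule KL)
    show "\<forall>j\<in>{..<m}. \<forall>x e t. Q n (Gs j) (Dx d (\<lambda>k. x k - t * e k)) = Q n (Gs j) (Dx d x) - t * Q n (Gs j) (Dx d e)"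
      by (simp add: Dx_lin Q_lin)
    show "\<forall>x e t. Q n GC (Dx d (\<lambda>k. x k - t * e k)) = Q n GC (Dx d x) - t * Q n GC (Dx d e)"
      by (simp add: Dx_lin Q_lin)
    show "\<forall>x. (\<forall>j\<in>{..<m}. Q n (Gs j) (Dx d x) = 0) \<longrightarrow> Q n GC (Dx d x) = 0"
    proof (intro allI impI)
      fix x assume h: "\<forall>j\<in>{..<m}. Q n (Gs j) (Dx d x) = 0"
      have c: "\<forall>i<m. fr n (Gs i) (Bp s x) = b $ i" for s
        using h cons0 Bp_fr by simp
      have "fr n GC B0 \<le> fr n GC (Bp 1 x)" by (rule opt0[OF Bp_s Bp_W c])
      moreover have "fr n GC B0 \<le> fr n GC (Bp (-1) x)" by (rule opt0[OF Bp_s Bp_W c])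
      ultimately show "Q n GC (Dx d x) = 0" unfolding Bp_fr by simp
    qed
  qed simp
  then obtain y where y: "\<forall>x. Q n GC (Dx d x) = (\<Sum>i<m. y i * Q n (Gs i) (Dx d x))" by auto
  have key1: "GC $$ (p,q) = (\<Sum>i<m. y i * Gs i $$ (p,q))" if "p < n" "q < n" "d \<le> p" for p q
  proof -
    have "2 * GC $$ (p,q) = (\<Sum>i<m. y i * (2 * Gs i $$ (p,q)))"
      using y[rule_format, of "\<lambda>k. if k = (p,q) then 1 else 0"]
      unfolding Q_delta[OF GCsym that(3,1,2)]
      using Q_delta[OF Gsym that(3,1,2)] by (metis (no_types, lifting) lessThan_iff sum.cong)
    moreover have "(\<Sum>i<m. y i * (2 * Gs i $$ (p,q))) = 2 * (\<Sum>i<m. y i * Gs i $$ (p,q))"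
      by (simp add: sum_distrib_left mult.left_commute)
    ultimately show ?thesis by simp
  qed
  have key2: "GC $$ (a,c) = (\<Sum>i<m. y i * Gs i $$ (a,c))" if "a < n" "c < n" "\<not> (a < d \<and> c < d)" for a c
  proof (cases "d \<le> a")
    case True then show ?thesis using key1 that by auto
  next
    case False
    then have "d \<le> c" using that by auto
    then have "GC $$ (c,a) = (\<Sum>i<m. y i * Gs i $$ (c,a))" using key1 that by auto
    moreover have "(\<Sum>i<m. y i * Gs i $$ (c,a)) = (\<Sum>i<m. y i * Gs i $$ (a,c))"
      using Gsym that by (intro sum.cong refl) auto
    ultimately show ?thesis using GCsym that by auto
  qed
  have off: "(\<Sum>i<m. y' i * Gs i $$ (a,c)) = 0"
    if h: "\<forall>p<n. \<forall>q<n. d \<le> p \<and> d \<le> q \<longrightarrow> (\<Sum>i<m. y' i * Gs i $$ (p,q)) = 0"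
      and ac: "a < n" "c < n" "\<not> (a < d \<and> c < d)" "\<not> (d \<le> a \<and> d \<le> c)" for y' a c
  proof -
    define yy where "yy = vec m (\<lambda>k. y k + y' k)"
    have yyc: "yy \<in> carrier_vec m" unfolding yy_def by simp
    have sumyy: "(\<Sum>k<m. yy $ k * Gs k $$ (a',c')) = (\<Sum>k<m. y k * Gs k $$ (a',c')) + (\<Sum>k<m. y' k * Gs k $$ (a',c'))" for a' c'
      unfolding yy_def by (simp add: sum.distrib[symmetric] distrib_right)
    have "transpose_mat V * Lmap n m C A yy * V = 0\<^sub>m (n - d) (n - d)"
    proof (rule eq_matI)
      fix p q assume pq: "p < dim_row (0\<^sub>m (n - d) (n - d))" "q < dim_col (0\<^sub>m (n - d) (n - d))"
      then have "p < n - d" "q < n - d" by auto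
      then show "(transpose_mat V * Lmap n m C A yy * V) $$ (p,q) = 0\<^sub>m (n - d) (n - d) $$ (p,q)"
        unfolding VLV[OF \<open>p < n - d\<close> \<open>q < n - d\<close>] sumyy using key1 h by auto
    qed (use assms(6) in auto)
    then have "yy \<in> {y \<in> carrier_vec m. transpose_mat V * Lmap n m C A y * V = 0\<^sub>m (n - d) (n - d)}"
      using yyc by auto
    then have VU: "transpose_mat V * Lmap n m C A yy * U = 0\<^sub>m (n - d) d" using assms(10) by auto
    have gen: "(\<Sum>i<m. y' i * Gs i $$ (p + d, q)) = 0" if "p < n - d" "q < d" for p q
    proof -
      have "(transpose_mat V * Lmap n m C A yy * U) $$ (p,q) = 0" using VU that by simp
      then show ?thesis unfolding VLU[OF that] sumyy using key1[of "p+d" q] that by auto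
    qed
    show ?thesis
    proof (cases "d \<le> a")
      case True
      then show ?thesis using gen[of "a - d" c] ac by auto
    next
      case False
      then have "d \<le> c" "a < d" using ac by auto
      then have "(\<Sum>i<m. y' i * Gs i $$ (c,a)) = 0" using gen[of "c - d" a] ac by auto
      moreover have "(\<Sum>i<m. y' i * Gs i $$ (c,a)) = (\<Sum>i<m. y' i * Gs i $$ (a,c))"
        using Gsym ac by (intro sum.cong refl) auto
      ultimately show ?thesis by simp
    qed
  qed
  define br where "br a c = (d \<le> a \<and> d \<le> (c::nat))" for a c
  define Of where "Of a c = (if (a < d \<and> c < d) \<or> br a c then 0 else B0 $$ (a,c))" for a c
  define h where "h i = Q n (Gs i) Of" for i
  define ff where "ff j y' = (if br (fst j) (snd j) then (\<Sum>i<m. y' i * Gs i $$ j) else 0)" for j y'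
  have "\<exists>r. \<forall>y'. (\<Sum>i<m. y' i * h i) = (\<Sum>j\<in>{..<n} \<times> {..<n}. r j * ff j y')"
  proof (rule KL)
    show "\<forall>j\<in>{..<n} \<times> {..<n}. \<forall>x e t. ff j (\<lambda>k. x k - t * e k) = ff j x - t * ff j e"
      unfolding ff_def by (simp add: left_diff_distrib sum_subtractf sum_distrib_left mult.assoc)
    show "\<forall>x e t. (\<Sum>i<m. (x i - t * e i) * h i) = (\<Sum>i<m. x i * h i) - t * (\<Sum>i<m. e i * h i)"
      by (simp add: left_diff_distrib sum_subtractf sum_distrib_left mult.assoc)
    show "\<forall>x. (\<forall>j\<in>{..<n} \<times> {..<n}. ff j x = 0) \<longrightarrow> (\<Sum>i<m. x i * h i) = 0"
    proof (intro allI impI)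
      fix y' assume hy: "\<forall>j\<in>{..<n} \<times> {..<n}. ff j y' = 0"
      have hh: "\<forall>p<n. \<forall>q<n. d \<le> p \<and> d \<le> q \<longrightarrow> (\<Sum>i<m. y' i * Gs i $$ (p,q)) = 0"
        using hy unfolding ff_def br_def by force
      have "Q n (0\<^sub>m n n) Of = (\<Sum>i<m. y' i * Q n (Gs i) Of)"
      proof (rule Q_comb)
        show "\<forall>a<n. \<forall>c<n. Of a c \<noteq> 0 \<longrightarrow> 0\<^sub>m n n $$ (a, c) = (\<Sum>i<m. y' i * Gs i $$ (a, c))"
          using off[OF hh] unfolding Of_def br_def by auto
      qed
      then show "(\<Sum>i<m. y' i * h i) = 0" unfolding h_def Q_def by simp
    qed
  qed simp
  then obtain r where r: "\<forall>y'. (\<Sum>i<m. y' i * h i) = (\<Sum>j\<in>{..<n} \<times> {..<n}. r j * ff j y')" by blast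
  have sd: "(\<Sum>k<m. (if k = i then 1 else 0) * \<phi> k) = \<phi> i" if "i < m" for i and \<phi> :: "nat \<Rightarrow> real"
  proof -
    have "(\<Sum>k<m. (if k = i then 1 else 0) * \<phi> k) = (\<Sum>k<m. if k = i then \<phi> k else 0)"
      by (intro sum.cong) auto
    then show ?thesis using that by simp
  qed
  have hrep: "h i = (\<Sum>a<n. \<Sum>c<n. if br a c then Gs i $$ (a,c) * r (a,c) else 0)" if "i < m" for i
  proof -
    have "(\<Sum>k<m. (if k = i then 1 else 0) * h k) = (\<Sum>k<m. if k = i then h k else 0)"
      by (intro sum.cong) auto
    then have "h i = (\<Sum>k<m. (if k = i then 1 else 0) * h k)" using that by simp
    also have "\<dots> = (\<Sum>j\<in>{..<n} \<times> {..<n}. r j * ff j (\<lambda>k. if k = i then 1 else 0))" by (rule r[rule_format])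
    also have "\<dots> = (\<Sum>a<n. \<Sum>c<n. r (a,c) * ff (a,c) (\<lambda>k. if k = i then 1 else 0))"
      by (simp add: sum.cartesian_product)
    also have "\<dots> = (\<Sum>a<n. \<Sum>c<n. if br a c then Gs i $$ (a,c) * r (a,c) else 0)"
      unfolding ff_def using that sd by (intro sum.cong refl) simp
    finally show ?thesis .
  qed
  define S where "S a c = (r (a,c) + r (c,a)) / 2" for a c
  define Dl where "Dl a c = (if br a c then S a c else 0) - Of a c" for a c
  define B' where "B' = mat n n (\<lambda>(a,c). B0 $$ (a,c) + Dl a c)"
  have brsym: "br a c = br c a" for a c unfolding br_def by auto
  have Ofsym: "Of a c = Of c a" if "a < n" "c < n" for a c
    unfolding Of_def using B0sym that brsym by auto
  have QS: "Q n G (\<lambda>a c. if br a c then S a c else 0) = (\<Sum>a<n. \<Sum>c<n. if br a c then G $$ (a,c) * r (a,c) else 0)"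
    if Gs: "\<forall>a<n. \<forall>c<n. G $$ (a,c) = G $$ (c,a)" for G
  proof -
    define T1 where "T1 = (\<Sum>a<n. \<Sum>c<n. if br a c then G $$ (a,c) * r (a,c) else 0)"
    define T2 where "T2 = (\<Sum>a<n. \<Sum>c<n. if br a c then G $$ (a,c) * r (c,a) else 0)"
    have "Q n G (\<lambda>a c. if br a c then S a c else 0) =
        (\<Sum>a<n. \<Sum>c<n. ((if br a c then G $$ (a,c) * r (a,c) else 0) + (if br a c then G $$ (a,c) * r (c,a) else 0)) / 2)"
      unfolding Q_def S_def by (intro sum.cong refl) (auto simp: algebra_simps)
    also have "\<dots> = (T1 + T2) / 2"
      unfolding T1_def T2_def by (simp only: sum_divide_distrib[symmetric] sum.distrib)
    also have "T2 = (\<Sum>c<n. \<Sum>a<n. if br a c then G $$ (a,c) * r (c,a) else 0)"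
      unfolding T2_def by (rule sum.swap)
    also have "\<dots> = T1"
      unfolding T1_def using Gs brsym by (intro sum.cong refl) auto
    finally show ?thesis unfolding T1_def by simp
  qed
  have QDl: "Q n (Gs i) Dl = 0" if "i < m" for i
  proof -
    have "Q n (Gs i) Dl = Q n (Gs i) (\<lambda>a c. if br a c then S a c else 0) - 1 * Q n (Gs i) Of"
      unfolding Dl_def using Q_lin[of n "Gs i" "\<lambda>a c. if br a c then S a c else 0" 1 Of] by simp
    then show ?thesis using QS[OF Gsym[OF that]] hrep[OF that] unfolding h_def by simp
  qed
  have B'c: "B' \<in> carrier_mat n n" unfolding B'_def by simp
  have B's: "symm n B'"
    unfolding symm_def B'_def Dl_def S_def using B0sym Ofsym brsym by (auto simp: add.commute)
  have B'W: "blkW d B' = W0"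
  proof -
    have "blkW d B' = blkW d B0"
      unfolding blkW_def B'_def Dl_def Of_def br_def using dn by (intro eq_matI) auto
    then show ?thesis using blkW0 by simp
  qed
  have B'Z: "blkZ n d B' = 0\<^sub>m d (n - d)"
    unfolding blkZ_def B'_def Dl_def Of_def br_def by (intro eq_matI) auto
  have B'fr: "fr n G B' = fr n G B0 + Q n G Dl" for G
    unfolding B'_def by (rule fr_add[OF B0c])
  have B'cons: "\<forall>i<m. fr n (Gs i) B' = b $ i" using B'fr QDl cons0 by simp
  have QC: "Q n GC Dl = 0"
  proof -
    have "Q n GC Dl = (\<Sum>i<m. y i * Q n (Gs i) Dl)"
    proof (rule Q_comb)
      show "\<forall>a<n. \<forall>c<n. Dl a c \<noteq> 0 \<longrightarrow> GC $$ (a, c) = (\<Sum>i<m. y i * Gs i $$ (a, c))"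
        using key2 unfolding Dl_def Of_def br_def by auto
    qed
    then show ?thesis using QDl by simp
  qed
  have feasN: "RD_feasible n d m A b U V W0 (0\<^sub>m d (n - d)) (blkR n d B')"
    using feas_B[OF B's _ B'cons] psd0 unfolding B'W B'Z by simp
  show ?thesis
  proof (intro exI)
    show "RD_optimal n d m C A b U V W0 (0\<^sub>m d (n - d)) (blkR n d B')"
      unfolding RD_optimal_def
    proof (intro conjI allI impI feasN)
      fix W' Z' R' assume f': "RD_feasible n d m A b U V W' Z' R'"
      have "tinner C (Xof n d U V W0 (0\<^sub>m d (n - d)) (blkR n d B')) = fr n GC B'"
        using val_B[OF B's Cc] unfolding B'W B'Z GC_def by simp
      also have "\<dots> = tinner C (Xof n d U V W0 Z0 R0)" using B'fr QC val0 by simp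
      also have "\<dots> \<le> tinner C (Xof n d U V W' Z' R')" using opt f' unfolding RD_optimal_def by blast
      finally show "tinner C (Xof n d U V W0 (0\<^sub>m d (n - d)) (blkR n d B')) \<le> tinner C (Xof n d U V W' Z' R')" .
    qed
  qed
qed


end
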